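(* For every integer $n>0$, $$A(n)=B(n)=C(n+1)=\tfrac12 D(n+1)=E(n+2)=F(n+1).$$
   Context: The partition functions are defined as follows. - $A(n)$ is the number of partitions of $n$ into distinct parts. - $B(n)$ is the number of partitions of $n$ into odd parts. - $C(n)$ is the number of partitions of $n$ whose largest part is even and whose parts not exceeding half of the largest part are distinct. - $D(n)$ is the number of partitions of $n$ into non-negative parts (part $0$ allowed) in which the smallest part appears exactly twice and no other part is repeated. - $E(n)$ is the number of partitions of $n$ in which all parts are odd and the largest part appears exactly once. - $F(n)$ is the number of partitions of $n$ whose largest part is even and appears exactly once, all other parts being odd. *)

theory Defs
  imports Main "HOL-Library.Multiset"
begin

definition partitions :: "nat \<Rightarrow> nat multiset set" where
  "partitions n = {M. (\<forall>x\<in>#M. 0 < x) \<and> sum_mset M = n}"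

definition A :: "nat \<Rightarrow> nat" where
  "A n = card {M \<in> partitions n. \<forall>x. count M x \<le> 1}"

definition B :: "nat \<Rightarrow> nat" where
  "B n = card {M \<in> partitions n. \<forall>x\<in>#M. odd x}"

definition C :: "nat \<Rightarrow> nat" where
  "C n = card {M \<in> partitions n. M \<noteq> {#} \<and> even (Max (set_mset M)) \<and>
      (\<forall>x. 2 * x \<le> Max (set_mset M) \<longrightarrow> count M x \<le> 1)}"

text \<open>Partitions into non-negative parts (0 allowed).\<close>
definition D :: "nat \<Rightarrow> nat" where
  "D n = card {M :: nat multiset. sum_mset M = n \<and> M \<noteq> {#} \<and>
      count M (Min (set_mset M)) = 2 \<and>
      (\<forall>x. x \<noteq> Min (set_mset M) \<longrightarrow> count M x \<le> 1)}"

definition E :: "nat \<Rightarrow> nat" where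
  "E n = card {M \<in> partitions n. M \<noteq> {#} \<and> (\<forall>x\<in>#M. odd x) \<and>
      count M (Max (set_mset M)) = 1}"

definition F :: "nat \<Rightarrow> nat" where
  "F n = card {M \<in> partitions n. M \<noteq> {#} \<and> even (Max (set_mset M)) \<and>
      count M (Max (set_mset M)) = 1 \<and>
      (\<forall>x\<in>#M. x \<noteq> Max (set_mset M) \<longrightarrow> odd x)}"

end

theory Submission
  imports Defs
begin


lemma size_le_sum: "(\<forall>x\<in>#M. 0 < x) \<Longrightarrow> size M \<le> sum_mset (M::nat multiset)"
  by (induction M) auto

lemma mem_le_sum: "x \<in># M \<Longrightarrow> x \<le> sum_mset (M::nat multiset)"
  using sum_mset.remove[of x M] by simp

lemma fin_parts: "finite {M::nat multiset. (\<forall>x\<in>#M. 0 < x \<and> x \<le> b) \<and> sum_mset M = N}"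
proof -
  have "{M::nat multiset. (\<forall>x\<in>#M. 0 < x \<and> x \<le> b) \<and> sum_mset M = N}
     \<subseteq> (\<Union>m\<in>{..N}. multisets_of_size {..b} m)"
    using size_le_sum unfolding multisets_of_size_def by fastforce
  moreover have "finite (\<Union>m\<in>{..N}. multisets_of_size {..b} m)" by auto
  ultimately show ?thesis by (rule finite_subset)
qed

lemma fin_sub:
  assumes "\<And>M. M \<in> S \<Longrightarrow> (\<forall>x\<in>#M. 0 < x \<and> x \<le> b) \<and> sum_mset M = N"
  shows "finite (S::nat multiset set)"
proof (rule finite_subset[OF _ fin_parts[of b N]])
  show "S \<subseteq> {M::nat multiset. (\<forall>x\<in>#M. 0 < x \<and> x \<le> b) \<and> sum_mset M = N}"
    using assms by blast
qed

lemma card_split: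
  assumes "finite S"
  shows "card S = card {M\<in>S. a \<notin># M} + card {X. add_mset a X \<in> S}"
proof -
  have e: "S = {M\<in>S. a \<notin># M} \<union> add_mset a ` {X. add_mset a X \<in> S}"
    by (auto simp: image_iff) (metis insert_DiffM)
  have fi: "finite (add_mset a ` {X. add_mset a X \<in> S})"
    by (rule finite_subset[OF _ assms]) auto
  have inj: "inj_on (add_mset a) {X. add_mset a X \<in> S}" by (auto simp: inj_on_def)
  have "card S = card {M\<in>S. a \<notin># M} + card (add_mset a ` {X. add_mset a X \<in> S})"
    by (subst e, rule card_Un_disjoint) (use assms fi in auto)
  then show ?thesis using card_image[OF inj] by simp
qed

lemma sum_mset_filter_ne:
  "sum_mset (M::nat multiset) = sum_mset (filter_mset (\<lambda>x. x \<noteq> a) M) + count M a * a"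
proof -
  have "M = filter_mset (\<lambda>x. x = a) M + filter_mset (\<lambda>x. x \<noteq> a) M"
    by (rule multiset_partition)
  then have "sum_mset M = sum_mset (filter_mset (\<lambda>x. x = a) M) + sum_mset (filter_mset (\<lambda>x. x \<noteq> a) M)"
    by (metis sum_mset.union)
  then show ?thesis by (simp add: filter_eq_replicate_mset)
qed

definition Q :: "nat \<Rightarrow> nat \<Rightarrow> nat multiset set" where
  "Q k N = {M. (\<forall>x\<in>#M. 0 < x \<and> x \<le> 2*k) \<and> (\<forall>x. x \<le> k \<longrightarrow> count M x \<le> 1) \<and> sum_mset M = N}"

definition Od :: "nat \<Rightarrow> nat \<Rightarrow> nat multiset set" where
  "Od k N = {M. (\<forall>x\<in>#M. odd x \<and> x < 2*k) \<and> sum_mset M = N}"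

lemma fin_Q: "finite (Q k N)"
  by (rule fin_sub[of _ "2*k" N]) (auto simp: Q_def)

lemma fin_Od: "finite (Od k N)"
  by (rule fin_sub[of _ "2*k" N]) (auto simp: Od_def intro: odd_pos)

lemma odd_lt: "odd (x::nat) \<Longrightarrow> x < 2*Suc k \<Longrightarrow> x \<noteq> 2*k+1 \<Longrightarrow> x < 2*k"
  by presburger

lemma O_rec: "card (Od (Suc k) N) = card (Od k N) + (if 2*k+1 \<le> N then card (Od (Suc k) (N - (2*k+1))) else 0)"
proof -
  have a: "{M \<in> Od (Suc k) N. 2*k+1 \<notin># M} = Od k N"
    unfolding Od_def using odd_lt by fastforce
  have b: "{X. add_mset (2*k+1) X \<in> Od (Suc k) N} = (if 2*k+1 \<le> N then Od (Suc k) (N - (2*k+1)) else {})"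
  proof -
    have "add_mset (2*k+1) X \<in> Od (Suc k) N \<longleftrightarrow> (2*k+1 \<le> N \<and> X \<in> Od (Suc k) (N - (2*k+1)))" for X
    proof -
      have "add_mset (2*k+1) X \<in> Od (Suc k) N \<longleftrightarrow> (\<forall>x\<in>#X. odd x \<and> x < 2*Suc k) \<and> 2*k+1 + sum_mset X = N"
        unfolding Od_def by simp
      also have "\<dots> \<longleftrightarrow> (2*k+1 \<le> N \<and> X \<in> Od (Suc k) (N - (2*k+1)))"
        unfolding Od_def by (simp only: mem_Collect_eq) linarith
      finally show ?thesis .
    qed
    then show ?thesis by auto
  qed
  show ?thesis using card_split[OF fin_Od, of "Suc k" N "2*k+1"] a b by simp
qed

lemma set_sub_single: "set_mset M \<subseteq> {a} \<Longrightarrow> M = replicate_mset (count M a) a"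
proof (rule multiset_eqI)
  fix x assume "set_mset M \<subseteq> {a}"
  then show "count M x = count (replicate_mset (count M a) a) x"
    by (cases "x = a") (auto simp: count_eq_zero_iff)
qed

lemma O1: "card (Od 1 N) = 1"
proof -
  have "Od 1 N = {replicate_mset N 1}"
  proof (intro equalityI subsetI)
    fix M assume "M \<in> Od 1 N"
    then have h: "\<forall>x\<in>#M. odd x \<and> x < 2" "N = sum_mset M" by (auto simp: Od_def)
    have "\<forall>x\<in>#M. x = 1" using h(1) by (metis One_nat_def even_zero less_2_cases)
    then have "set_mset M \<subseteq> {1}" by blast
    then have M: "M = replicate_mset (count M 1) 1" by (rule set_sub_single)
    then have "sum_mset M = count M 1" by (metis mult.right_neutral of_nat_id sum_mset_replicate_mset)
    then show "M \<in> {replicate_mset N 1}" using M h(2) by simp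
  next
    fix M assume "M \<in> {replicate_mset N (1::nat)}"
    then show "M \<in> Od 1 N" by (auto simp: Od_def)
  qed
  then show ?thesis by simp
qed

lemma Q1: "card (Q 1 N) = 1"
proof -
  have "Q 1 N = {replicate_mset (N mod 2) 1 + replicate_mset (N div 2) 2}"
  proof (intro equalityI subsetI)
    fix M assume "M \<in> Q 1 N"
    then have h: "\<forall>x\<in>#M. 0 < x \<and> x \<le> 2" "count M 1 \<le> 1" "N = sum_mset M" by (auto simp: Q_def)
    have "M = filter_mset (\<lambda>x. x = 1) M + filter_mset (\<lambda>x. x \<noteq> 1) M" by (rule multiset_partition)
    moreover have "filter_mset (\<lambda>x. x \<noteq> 1) M = replicate_mset (count M 2) 2"
    proof -
      have "\<forall>x\<in>#filter_mset (\<lambda>x. x \<noteq> 1) M. x = 2" using h(1) by auto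
      then have "set_mset (filter_mset (\<lambda>x. x \<noteq> 1) M) \<subseteq> {2}" by blast
      then have "filter_mset (\<lambda>x. x \<noteq> 1) M = replicate_mset (count (filter_mset (\<lambda>x. x \<noteq> 1) M) 2) 2"
        by (rule set_sub_single)
      then show ?thesis by simp
    qed
    ultimately have M: "M = replicate_mset (count M 1) 1 + replicate_mset (count M 2) 2"
      by (simp add: filter_eq_replicate_mset)
    then have s: "sum_mset M = count M 1 + 2 * count M 2"
      by (metis mult.commute mult.right_neutral of_nat_id sum_mset.union sum_mset_replicate_mset)
    have "sum_mset M mod 2 = count M 1" "sum_mset M div 2 = count M 2" using s h(2) by auto
    then show "M \<in> {replicate_mset (N mod 2) 1 + replicate_mset (N div 2) 2}"
      using M h(3) by simp
  next
    fix M assume "M \<in> {replicate_mset (N mod 2) 1 + replicate_mset (N div 2) (2::nat)}"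
    then show "M \<in> Q 1 N" by (auto simp: Q_def)
  qed
  then show ?thesis by simp
qed



lemma Q_rem:
  assumes k: "1 \<le> k"
  shows "card {M \<in> Q (Suc k) N. 2*k+1 \<notin># M} = card (Q k N)"
proof -
  define a where "a = k + 1"
  define b where "b = 2*k + 2"
  have ab: "a \<noteq> b" "b = 2*a" "2 \<le> a" "a \<le> 2*k" "b \<noteq> 2*k+1" "a \<noteq> 2*k+1"
    using k by (auto simp: a_def b_def)
  define S where "S = {M \<in> Q (Suc k) N. 2*k+1 \<notin># M}"
  define \<phi> where "\<phi> M = filter_mset (\<lambda>x. x \<noteq> b) M + replicate_mset (2 * count M b) a" for M
  define \<psi> where "\<psi> M = filter_mset (\<lambda>x. x \<noteq> a) M + replicate_mset (count M a mod 2) a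
      + replicate_mset (count M a div 2) b" for M
  have cphi: "count (\<phi> M) x = (if x = b then 0 else count M x) + (if x = a then 2 * count M b else 0)" for M x
    using ab by (simp add: \<phi>_def)
  have cpsi: "count (\<psi> M) x = (if x = a then count M a mod 2 else if x = b then count M b + count M a div 2
      else count M x)" for M x
    using ab by (auto simp: \<psi>_def)
  have sphi: "sum_mset (\<phi> M) = sum_mset M" for M
  proof -
    have "sum_mset (\<phi> M) = sum_mset (filter_mset (\<lambda>x. x \<noteq> b) M) + 2 * count M b * a"
      by (simp add: \<phi>_def)
    also have "\<dots> = sum_mset (filter_mset (\<lambda>x. x \<noteq> b) M) + count M b * b" using ab by simp
    also have "\<dots> = sum_mset M" using sum_mset_filter_ne[of M b] by simp
    finally show ?thesis .
  qed
  have spsi: "sum_mset (\<psi> M) = sum_mset M" for M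
  proof -
    have "sum_mset (\<psi> M) = sum_mset (filter_mset (\<lambda>x. x \<noteq> a) M) + (count M a mod 2) * a
       + (count M a div 2) * b"
      by (simp add: \<psi>_def)
    also have "(count M a mod 2) * a + (count M a div 2) * b = count M a * a"
      using ab by (metis add.commute mult.assoc mult.commute distrib_right div_mult_mod_eq)
    then have "sum_mset (filter_mset (\<lambda>x. x \<noteq> a) M) + (count M a mod 2) * a + (count M a div 2) * b
       = sum_mset (filter_mset (\<lambda>x. x \<noteq> a) M) + count M a * a" by simp
    also have "\<dots> = sum_mset M" using sum_mset_filter_ne[of M a] by simp
    finally show ?thesis .
  qed
  have memS: "M \<in> S \<longleftrightarrow> (\<forall>x. count M x > 0 \<longrightarrow> 0 < x \<and> x \<le> 2*k+2 \<and> x \<noteq> 2*k+1)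
     \<and> (\<forall>x. x \<le> Suc k \<longrightarrow> count M x \<le> 1) \<and> sum_mset M = N" for M
    unfolding S_def Q_def by auto
  have memT: "M \<in> Q k N \<longleftrightarrow> (\<forall>x. count M x > 0 \<longrightarrow> 0 < x \<and> x \<le> 2*k)
     \<and> (\<forall>x. x \<le> k \<longrightarrow> count M x \<le> 1) \<and> sum_mset M = N" for M
    unfolding Q_def by auto
  have "bij_betw \<phi> S (Q k N)"
  proof (rule bij_betw_byWitness[where f'=\<psi>])
    show "\<forall>M\<in>S. \<psi> (\<phi> M) = M"
    proof
      fix M assume "M \<in> S"
      then have c: "count M a \<le> 1" using memS ab a_def by auto
      show "\<psi> (\<phi> M) = M"
      proof (rule multiset_eqI)
        fix x
        have "(count M a + 2 * count M b) mod 2 = count M a" "(count M a + 2 * count M b) div 2 = count M b"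
          using c by auto
        then show "count (\<psi> (\<phi> M)) x = count M x" using ab by (simp add: cpsi cphi)
      qed
    qed
    show "\<forall>M\<in>Q k N. \<phi> (\<psi> M) = M"
    proof
      fix M assume "M \<in> Q k N"
      then have c: "count M b = 0" using memT ab b_def by (metis Suc_n_not_le_n add_2_eq_Suc' gr0I le_Suc_eq)
      show "\<phi> (\<psi> M) = M"
      proof (rule multiset_eqI)
        fix x
        have "count M a mod 2 + 2 * (count M a div 2) = count M a" by simp
        then show "count (\<phi> (\<psi> M)) x = count M x" using ab c by (simp add: cpsi cphi)
      qed
    qed
    show "\<phi> ` S \<subseteq> Q k N"
    proof
      fix M' assume "M' \<in> \<phi> ` S"
      then obtain M where M: "M \<in> S" "M' = \<phi> M" by auto
      have h: "\<forall>x. count M x > 0 \<longrightarrow> 0 < x \<and> x \<le> 2*k+2 \<and> x \<noteq> 2*k+1"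
        "\<forall>x. x \<le> Suc k \<longrightarrow> count M x \<le> 1" "sum_mset M = N" using M(1) memS by auto
      have "\<forall>x. count M' x > 0 \<longrightarrow> 0 < x \<and> x \<le> 2*k"
      proof (intro allI impI)
        fix x assume "count M' x > 0"
        then have "(x \<noteq> b \<and> count M x > 0) \<or> x = a" using M(2) cphi[of M x] by (auto split: if_splits)
        then show "0 < x \<and> x \<le> 2*k" using h(1) ab b_def by force
      qed
      moreover have "\<forall>x. x \<le> k \<longrightarrow> count M' x \<le> 1"
        using h(2) M(2) cphi ab a_def b_def by auto
      moreover have "sum_mset M' = N" using M(2) sphi h(3) by simp
      ultimately show "M' \<in> Q k N" using memT by blast
    qed
    show "\<psi> ` Q k N \<subseteq> S"
    proof
      fix M' assume "M' \<in> \<psi> ` Q k N"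
      then obtain M where M: "M \<in> Q k N" "M' = \<psi> M" by auto
      have h: "\<forall>x. count M x > 0 \<longrightarrow> 0 < x \<and> x \<le> 2*k"
        "\<forall>x. x \<le> k \<longrightarrow> count M x \<le> 1" "sum_mset M = N" using M(1) memT by auto
      have "\<forall>x. count M' x > 0 \<longrightarrow> 0 < x \<and> x \<le> 2*k+2 \<and> x \<noteq> 2*k+1"
      proof (intro allI impI)
        fix x assume "count M' x > 0"
        then have "count M x > 0 \<or> x = a \<or> x = b" using M(2) cpsi[of M x] by (auto split: if_splits)
        then show "0 < x \<and> x \<le> 2*k+2 \<and> x \<noteq> 2*k+1" using h(1) ab a_def b_def by force
      qed
      moreover have "\<forall>x. x \<le> Suc k \<longrightarrow> count M' x \<le> 1"
        using h(2) M(2) cpsi ab a_def b_def by auto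
      moreover have "sum_mset M' = N" using M(2) spsi h(3) by simp
      ultimately show "M' \<in> S" using memS by blast
    qed
  qed
  then show ?thesis unfolding S_def by (rule bij_betw_same_card)
qed



lemma Q_rec:
  assumes k: "1 \<le> k"
  shows "card (Q (Suc k) N) = card (Q k N) + (if 2*k+1 \<le> N then card (Q (Suc k) (N - (2*k+1))) else 0)"
proof -
  have b: "{X. add_mset (2*k+1) X \<in> Q (Suc k) N} = (if 2*k+1 \<le> N then Q (Suc k) (N - (2*k+1)) else {})"
  proof -
    have "add_mset (2*k+1) X \<in> Q (Suc k) N \<longleftrightarrow> (2*k+1 \<le> N \<and> X \<in> Q (Suc k) (N - (2*k+1)))" for X
    proof -
      have cc: "\<forall>x. x \<le> Suc k \<longrightarrow> count (add_mset (2*k+1) X) x = count X x" using k by auto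
      have "add_mset (2*k+1) X \<in> Q (Suc k) N \<longleftrightarrow> (\<forall>x\<in>#X. 0 < x \<and> x \<le> 2*Suc k) \<and>
          (\<forall>x. x \<le> Suc k \<longrightarrow> count X x \<le> 1) \<and> 2*k+1 + sum_mset X = N"
        unfolding Q_def using cc by simp
      also have "\<dots> \<longleftrightarrow> (2*k+1 \<le> N \<and> X \<in> Q (Suc k) (N - (2*k+1)))"
        unfolding Q_def by (simp only: mem_Collect_eq) (cases "2*k+1 \<le> N"; auto)
      finally show ?thesis .
    qed
    then show ?thesis by auto
  qed
  show ?thesis using card_split[OF fin_Q, of "Suc k" N "2*k+1"] Q_rem[OF k, of N] b by simp
qed

lemma glaisher:
  assumes "1 \<le> k"
  shows "card (Q k N) = card (Od k N)"
  using assms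
proof (induction k arbitrary: N rule: nat_induct_at_least)
  case base
  then show ?case using Q1 O1 by simp
next
  case (Suc k)
  show ?case
  proof (induction N rule: less_induct)
    case (less N)
    show ?case
    proof (cases "2*k+1 \<le> N")
      case True
      then have "card (Q (Suc k) (N - (2*k+1))) = card (Od (Suc k) (N - (2*k+1)))"
        using less by simp
      then show ?thesis using Q_rec[OF Suc(1), of N] O_rec[of k N] Suc(2)[of N] by simp
    next
      case False
      then show ?thesis using Q_rec[OF Suc(1), of N] O_rec[of k N] Suc(2)[of N] by simp
    qed
  qed
qed



lemma card_decomp:
  fixes g :: "nat \<Rightarrow> nat" and U :: "nat \<Rightarrow> nat multiset set"
  assumes K: "finite K" and g: "inj_on g K"
    and le: "\<And>k X x. k \<in> K \<Longrightarrow> X \<in> U k \<Longrightarrow> x \<in># X \<Longrightarrow> x \<le> g k"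
    and fin: "\<And>k. k \<in> K \<Longrightarrow> finite (U k)"
  shows "card (\<Union>k\<in>K. add_mset (g k) ` U k) = (\<Sum>k\<in>K. card (U k))"
proof -
  have "card (\<Union>k\<in>K. add_mset (g k) ` U k) = (\<Sum>k\<in>K. card (add_mset (g k) ` U k))"
  proof (rule card_UN_disjoint)
    show "finite K" by fact
    show "\<forall>i\<in>K. finite (add_mset (g i) ` U i)" using fin by auto
    show "\<forall>i\<in>K. \<forall>j\<in>K. i \<noteq> j \<longrightarrow> add_mset (g i) ` U i \<inter> add_mset (g j) ` U j = {}"
    proof (intro ballI impI)
      fix i j assume ij: "i \<in> K" "j \<in> K" "i \<noteq> j"
      show "add_mset (g i) ` U i \<inter> add_mset (g j) ` U j = {}"
      proof (rule ccontr)
        assume "add_mset (g i) ` U i \<inter> add_mset (g j) ` U j \<noteq> {}"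
        then obtain X Y where XY: "X \<in> U i" "Y \<in> U j" "add_mset (g i) X = add_mset (g j) Y" by blast
        have "g j \<in># add_mset (g i) X" using XY(3) by simp
        then have 1: "g j \<le> g i" using le[OF ij(1) XY(1)] by auto
        have "g i \<in># add_mset (g j) Y" using XY(3)[symmetric] by simp
        then have 2: "g i \<le> g j" using le[OF ij(2) XY(2)] by auto
        from 1 2 have "g i = g j" by simp
        then show False using g ij unfolding inj_on_def by blast
      qed
    qed
  qed
  also have "\<dots> = (\<Sum>k\<in>K. card (U k))"
    by (rule sum.cong) (auto intro!: card_image simp: inj_on_def)
  finally show ?thesis .
qed

lemma Max_add: "(\<forall>x\<in>#X. x \<le> a) \<Longrightarrow> Max (set_mset (add_mset a X)) = (a::nat)"
  by (auto intro!: Max_eqI)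

lemma Max_facts:
  assumes "M \<noteq> {#}"
  shows "Max (set_mset M) \<in># M" "\<forall>x\<in>#M. x \<le> Max (set_mset (M::nat multiset))"
  using assms by auto

lemma remove_sum: "L \<in># M \<Longrightarrow> sum_mset (M - {#L#}) = sum_mset M - (L::nat)"
  using sum_mset.remove[of L M] by simp

lemma B_decomp:
  assumes n: "0 < n"
  shows "{M \<in> partitions n. \<forall>x\<in>#M. odd x} =
     (\<Union>k\<in>{1..(n+1) div 2}. add_mset (2*k-1) ` Od k (n+1-2*k))"
proof (intro equalityI subsetI)
  fix M assume "M \<in> {M \<in> partitions n. \<forall>x\<in>#M. odd x}"
  then have h: "\<forall>x\<in>#M. odd x" "sum_mset M = n" by (auto simp: partitions_def)
  then have ne: "M \<noteq> {#}" using n by auto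
  define L where "L = Max (set_mset M)"
  have L: "L \<in># M" "\<forall>x\<in>#M. x \<le> L" using Max_facts[OF ne] L_def by auto
  have oL: "odd L" using L h by auto
  have Ln: "L \<le> n" using mem_le_sum[OF L(1)] h by simp
  define k where "k = (L+1) div 2"
  have k: "2*k - 1 = L" "1 \<le> k" "k \<le> (n+1) div 2" "2*k = L+1" using oL Ln unfolding k_def
    by (auto elim!: oddE)
  define X where "X = M - {#L#}"
  have MX: "M = add_mset (2*k-1) X" using L(1) k(1) X_def by simp
  have "X \<in> Od k (n+1-2*k)"
  proof -
    have XM: "\<forall>x\<in>#X. x \<in># M" using X_def by (auto dest: in_diffD)
    have "\<forall>x\<in>#X. odd x \<and> x < 2*k" using h(1) L(2) k(4) XM by fastforce
    moreover have "sum_mset X = n+1-2*k" using remove_sum[OF L(1)] h(2) k(4) X_def by simp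
    ultimately show ?thesis by (simp add: Od_def)
  qed
  then have "M \<in> add_mset (2*k-1) ` Od k (n+1-2*k)" using MX by blast
  moreover have "k \<in> {1..(n+1) div 2}" using k by simp
  ultimately show "M \<in> (\<Union>k\<in>{1..(n+1) div 2}. add_mset (2*k-1) ` Od k (n+1-2*k))"
    by blast
next
  fix M assume "M \<in> (\<Union>k\<in>{1..(n+1) div 2}. add_mset (2*k-1) ` Od k (n+1-2*k))"
  then obtain k X where kX: "1 \<le> k" "k \<le> (n+1) div 2" "X \<in> Od k (n+1-2*k)" "M = add_mset (2*k-1) X"
    by auto
  have X: "\<forall>x\<in>#X. odd x \<and> x < 2*k" "sum_mset X = n+1-2*k" using kX(3) by (auto simp: Od_def)
  have "odd (2*k-1)" using kX(1) by presburger
  moreover have "sum_mset M = n" using kX X by auto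
  moreover have "\<forall>x\<in>#M. odd x" using X(1) kX(4) \<open>odd (2*k-1)\<close> by auto
  ultimately show "M \<in> {M \<in> partitions n. \<forall>x\<in>#M. odd x}"
    by (auto simp: partitions_def intro: odd_pos)
qed

lemma F_decomp:
  "{M \<in> partitions (n+1). M \<noteq> {#} \<and> even (Max (set_mset M)) \<and>
      count M (Max (set_mset M)) = 1 \<and> (\<forall>x\<in>#M. x \<noteq> Max (set_mset M) \<longrightarrow> odd x)} =
     (\<Union>k\<in>{1..(n+1) div 2}. add_mset (2*k) ` Od k (n+1-2*k))"
proof (intro equalityI subsetI)
  fix M assume "M \<in> {M \<in> partitions (n+1). M \<noteq> {#} \<and> even (Max (set_mset M)) \<and>
      count M (Max (set_mset M)) = 1 \<and> (\<forall>x\<in>#M. x \<noteq> Max (set_mset M) \<longrightarrow> odd x)}"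
  then have h: "\<forall>x\<in>#M. 0 < x" "sum_mset M = n+1" "M \<noteq> {#}" "even (Max (set_mset M))"
     "count M (Max (set_mset M)) = 1" "\<forall>x\<in>#M. x \<noteq> Max (set_mset M) \<longrightarrow> odd x"
    by (auto simp: partitions_def)
  define L where "L = Max (set_mset M)"
  have L: "L \<in># M" "\<forall>x\<in>#M. x \<le> L" using Max_facts[OF h(3)] L_def by auto
  have eL: "even L" "0 < L" using L h L_def by auto
  have Ln: "L \<le> n+1" using mem_le_sum[OF L(1)] h by simp
  define k where "k = L div 2"
  have k: "2*k = L" "1 \<le> k" "k \<le> (n+1) div 2" using eL Ln unfolding k_def
    by (auto elim!: evenE)
  define X where "X = M - {#L#}"
  have MX: "M = add_mset (2*k) X" using L(1) k(1) X_def by simp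
  have cX: "count X L = 0" using h(5) L_def X_def by simp
  have "X \<in> Od k (n+1-2*k)"
  proof -
    have XM: "\<forall>x\<in>#X. x \<in># M \<and> x \<noteq> L"
  proof
    fix x assume x: "x \<in># X"
    have "x \<in># M" using x unfolding X_def by (rule in_diffD)
    moreover have "x \<noteq> L" using x cX by (metis count_eq_zero_iff)
    ultimately show "x \<in># M \<and> x \<noteq> L" by simp
  qed
    have "\<forall>x\<in>#X. odd x \<and> x < 2*k"
    proof
      fix x assume "x \<in># X"
      then have x: "x \<in># M" "x \<noteq> L" using XM by auto
      have "odd x" using h(6) x unfolding L_def by blast
      moreover have "x < 2*k" using L(2) x k(1) by (metis le_neq_implies_less)
      ultimately show "odd x \<and> x < 2*k" by simp
    qed
    moreover have "sum_mset X = n+1-2*k" using remove_sum[OF L(1)] h(2) k(1) X_def by simp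
    ultimately show ?thesis by (simp add: Od_def)
  qed
  then have "M \<in> add_mset (2*k) ` Od k (n+1-2*k)" using MX by blast
  moreover have "k \<in> {1..(n+1) div 2}" using k by simp
  ultimately show "M \<in> (\<Union>k\<in>{1..(n+1) div 2}. add_mset (2*k) ` Od k (n+1-2*k))"
    by blast
next
  fix M assume "M \<in> (\<Union>k\<in>{1..(n+1) div 2}. add_mset (2*k) ` Od k (n+1-2*k))"
  then obtain k X where kX: "1 \<le> k" "k \<le> (n+1) div 2" "X \<in> Od k (n+1-2*k)" "M = add_mset (2*k) X"
    by auto
  have X: "\<forall>x\<in>#X. odd x \<and> x < 2*k" "sum_mset X = n+1-2*k" using kX(3) by (auto simp: Od_def)
  have mx: "Max (set_mset M) = 2*k" using kX(4) X(1) Max_add[of X "2*k"] by fastforce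
  have c: "count M (2*k) = 1" using kX(4) X(1) by (auto simp: count_eq_zero_iff)
  have "sum_mset M = n+1" using kX X by auto
  moreover have "\<forall>x\<in>#M. 0 < x" using X(1) kX by (auto intro: odd_pos)
  moreover have "\<forall>x\<in>#M. x \<noteq> 2*k \<longrightarrow> odd x" using X(1) kX(4) by auto
  ultimately show "M \<in> {M \<in> partitions (n+1). M \<noteq> {#} \<and> even (Max (set_mset M)) \<and>
      count M (Max (set_mset M)) = 1 \<and> (\<forall>x\<in>#M. x \<noteq> Max (set_mset M) \<longrightarrow> odd x)}"
    using mx c kX(4) by (simp add: partitions_def)
qed

lemma E_decomp:
  "{M \<in> partitions (n+2). M \<noteq> {#} \<and> (\<forall>x\<in>#M. odd x) \<and>
      count M (Max (set_mset M)) = 1} =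
     (\<Union>k\<in>{1..(n+1) div 2}. add_mset (2*k+1) ` Od k (n+1-2*k))"
proof (intro equalityI subsetI)
  fix M assume "M \<in> {M \<in> partitions (n+2). M \<noteq> {#} \<and> (\<forall>x\<in>#M. odd x) \<and>
      count M (Max (set_mset M)) = 1}"
  then have h: "sum_mset M = n+2" "M \<noteq> {#}" "\<forall>x\<in>#M. odd x"
     "count M (Max (set_mset M)) = 1"
    by (auto simp: partitions_def)
  define L where "L = Max (set_mset M)"
  have L: "L \<in># M" "\<forall>x\<in>#M. x \<le> L" using Max_facts[OF h(2)] L_def by auto
  have oL: "odd L" using L h by auto
  have Ln: "L \<le> n+2" using mem_le_sum[OF L(1)] h by simp
  define k where "k = L div 2"
  have k0: "2*k+1 = L" "k \<le> (n+1) div 2" using oL Ln unfolding k_def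
    by (auto elim!: oddE)
  define X where "X = M - {#L#}"
  have MX: "M = add_mset (2*k+1) X" using L(1) k0(1) X_def by simp
  have cX: "count X L = 0" using h(4) L_def X_def by simp
  have XM: "\<forall>x\<in>#X. x \<in># M \<and> x \<noteq> L"
  proof
    fix x assume x: "x \<in># X"
    have "x \<in># M" using x unfolding X_def by (rule in_diffD)
    moreover have "x \<noteq> L" using x cX by (metis count_eq_zero_iff)
    ultimately show "x \<in># M \<and> x \<noteq> L" by simp
  qed
  have Xo: "\<forall>x\<in>#X. odd x \<and> x < 2*k" 
  proof
    fix x assume "x \<in># X"
    then have "odd x" "x < L" using XM h(3) L(2) by fastforce+
    then show "odd x \<and> x < 2*k" using k0(1) by presburger
  qed
  have sX: "sum_mset X = n+1-2*k" using remove_sum[OF L(1)] h(1) k0(1) X_def by simp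
  have k1: "1 \<le> k"
  proof (rule ccontr)
    assume "\<not> 1 \<le> k"
    then have "k = 0" by simp
    then have "X = {#}" using Xo by auto
    then show False using sX \<open>k = 0\<close> by simp
  qed
  have "X \<in> Od k (n+1-2*k)" using Xo sX by (simp add: Od_def)
  then have "M \<in> add_mset (2*k+1) ` Od k (n+1-2*k)" using MX by blast
  moreover have "k \<in> {1..(n+1) div 2}" using k0 k1 by simp
  ultimately show "M \<in> (\<Union>k\<in>{1..(n+1) div 2}. add_mset (2*k+1) ` Od k (n+1-2*k))"
    by blast
next
  fix M assume "M \<in> (\<Union>k\<in>{1..(n+1) div 2}. add_mset (2*k+1) ` Od k (n+1-2*k))"
  then obtain k X where kX: "1 \<le> k" "k \<le> (n+1) div 2" "X \<in> Od k (n+1-2*k)" "M = add_mset (2*k+1) X"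
    by auto
  have X: "\<forall>x\<in>#X. odd x \<and> x < 2*k" "sum_mset X = n+1-2*k" using kX(3) by (auto simp: Od_def)
  have mx: "Max (set_mset M) = 2*k+1" using kX(4) X(1) Max_add[of X "2*k+1"] by fastforce
  have c: "count M (2*k+1) = 1" using kX(4) X(1) by (auto simp: count_eq_zero_iff)
  have "sum_mset M = n+2" using kX X by auto
  moreover have "\<forall>x\<in>#M. odd x" using X(1) kX(4) by auto
  moreover have "\<forall>x\<in>#M. 0 < x" using X(1) kX by (auto intro: odd_pos)
  ultimately show "M \<in> {M \<in> partitions (n+2). M \<noteq> {#} \<and> (\<forall>x\<in>#M. odd x) \<and>
      count M (Max (set_mset M)) = 1}"
    using mx c kX(4) by (simp add: partitions_def)
qed

lemma C_decomp:
  "{M \<in> partitions (n+1). M \<noteq> {#} \<and> even (Max (set_mset M)) \<and>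
      (\<forall>x. 2 * x \<le> Max (set_mset M) \<longrightarrow> count M x \<le> 1)} =
     (\<Union>k\<in>{1..(n+1) div 2}. add_mset (2*k) ` Q k (n+1-2*k))"
proof (intro equalityI subsetI)
  fix M assume "M \<in> {M \<in> partitions (n+1). M \<noteq> {#} \<and> even (Max (set_mset M)) \<and>
      (\<forall>x. 2 * x \<le> Max (set_mset M) \<longrightarrow> count M x \<le> 1)}"
  then have h: "\<forall>x\<in>#M. 0 < x" "sum_mset M = n+1" "M \<noteq> {#}" "even (Max (set_mset M))"
     "\<forall>x. 2 * x \<le> Max (set_mset M) \<longrightarrow> count M x \<le> 1"
    by (auto simp: partitions_def)
  define L where "L = Max (set_mset M)"
  have L: "L \<in># M" "\<forall>x\<in>#M. x \<le> L" using Max_facts[OF h(3)] L_def by auto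
  have eL: "even L" "0 < L" using L h L_def by auto
  have Ln: "L \<le> n+1" using mem_le_sum[OF L(1)] h by simp
  define k where "k = L div 2"
  have k: "2*k = L" "1 \<le> k" "k \<le> (n+1) div 2" using eL Ln unfolding k_def
    by (auto elim!: evenE)
  define X where "X = M - {#L#}"
  have MX: "M = add_mset (2*k) X" using L(1) k(1) X_def by simp
  have "X \<in> Q k (n+1-2*k)"
  proof -
    have XM: "\<forall>x\<in>#X. x \<in># M" using X_def by (auto dest: in_diffD)
    have "\<forall>x\<in>#X. 0 < x \<and> x \<le> 2*k" using h(1) L(2) k(1) XM by fastforce
    moreover have "\<forall>x. x \<le> k \<longrightarrow> count X x \<le> 1"
    proof (intro allI impI)
      fix x assume "x \<le> k"
      then have "count M x \<le> 1" using h(5) k(1) L_def by auto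
      moreover have "count X x \<le> count M x" using X_def by simp
      ultimately show "count X x \<le> 1" by simp
    qed
    moreover have "sum_mset X = n+1-2*k" using remove_sum[OF L(1)] h(2) k(1) X_def by simp
    ultimately show ?thesis by (simp add: Q_def)
  qed
  then have "M \<in> add_mset (2*k) ` Q k (n+1-2*k)" using MX by blast
  moreover have "k \<in> {1..(n+1) div 2}" using k by simp
  ultimately show "M \<in> (\<Union>k\<in>{1..(n+1) div 2}. add_mset (2*k) ` Q k (n+1-2*k))"
    by blast
next
  fix M assume "M \<in> (\<Union>k\<in>{1..(n+1) div 2}. add_mset (2*k) ` Q k (n+1-2*k))"
  then obtain k X where kX: "1 \<le> k" "k \<le> (n+1) div 2" "X \<in> Q k (n+1-2*k)" "M = add_mset (2*k) X"
    by auto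
  have X: "\<forall>x\<in>#X. 0 < x \<and> x \<le> 2*k" "\<forall>x. x \<le> k \<longrightarrow> count X x \<le> 1" "sum_mset X = n+1-2*k"
    using kX(3) by (auto simp: Q_def)
  have mx: "Max (set_mset M) = 2*k" using kX(4) X(1) Max_add[of X "2*k"] by fastforce
  have c: "\<forall>x. 2 * x \<le> 2*k \<longrightarrow> count M x \<le> 1"
  proof (intro allI impI)
    fix x assume "2 * x \<le> 2*k"
    then have "x \<le> k" "x \<noteq> 2*k" using kX(1) by auto
    then show "count M x \<le> 1" using X(2) kX(4) by simp
  qed
  have "sum_mset M = n+1" using kX X by auto
  moreover have "\<forall>x\<in>#M. 0 < x" using X(1) kX by auto
  ultimately show "M \<in> {M \<in> partitions (n+1). M \<noteq> {#} \<and> even (Max (set_mset M)) \<and>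
      (\<forall>x. 2 * x \<le> Max (set_mset M) \<longrightarrow> count M x \<le> 1)}"
    using mx c kX(4) by (simp add: partitions_def)
qed

lemma AB_sets:
  assumes n: "0 < n"
  shows "{M \<in> partitions n. \<forall>x. count M x \<le> 1} = Q n n"
    "{M \<in> partitions n. \<forall>x\<in>#M. odd x} = Od n n"
proof -
  show "{M \<in> partitions n. \<forall>x. count M x \<le> 1} = Q n n"
  proof (intro equalityI subsetI)
    fix M assume "M \<in> {M \<in> partitions n. \<forall>x. count M x \<le> 1}"
    then have h: "\<forall>x\<in>#M. 0 < x" "sum_mset M = n" "\<forall>x. count M x \<le> 1"
      by (auto simp: partitions_def)
    have "\<forall>x\<in>#M. 0 < x \<and> x \<le> 2*n" using h(1,2) mem_le_sum by fastforce
    then show "M \<in> Q n n" using h unfolding Q_def by blast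
  next
    fix M assume "M \<in> Q n n"
    then have h: "\<forall>x\<in>#M. 0 < x" "sum_mset M = n" "\<forall>x. x \<le> n \<longrightarrow> count M x \<le> 1"
      by (auto simp: Q_def)
    have "\<forall>x. count M x \<le> 1"
    proof
      fix x show "count M x \<le> 1"
      proof (cases "x \<le> n")
        case True then show ?thesis using h(3) by simp
      next
        case False
        then have "x \<notin># M" using mem_le_sum[of x M] h(2) by auto
        then show ?thesis by (simp add: not_in_iff)
      qed
    qed
    then show "M \<in> {M \<in> partitions n. \<forall>x. count M x \<le> 1}" using h unfolding partitions_def by blast
  qed
  show "{M \<in> partitions n. \<forall>x\<in>#M. odd x} = Od n n"
  proof (intro equalityI subsetI)
    fix M assume "M \<in> {M \<in> partitions n. \<forall>x\<in>#M. odd x}"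
    then have h: "\<forall>x\<in>#M. odd x" "sum_mset M = n"
      by (auto simp: partitions_def)
    have "\<forall>x\<in>#M. x < 2*n"
    proof
      fix x assume "x \<in># M"
      then have "x \<le> n" using mem_le_sum h(2) by fastforce
      then show "x < 2*n" using n by simp
    qed
    then show "M \<in> Od n n" using h unfolding Od_def by blast
  next
    fix M assume "M \<in> Od n n"
    then have h: "\<forall>x\<in>#M. odd x" "sum_mset M = n" by (auto simp: Od_def)
    have "\<forall>x\<in>#M. 0 < x" using h(1) by (auto intro: odd_pos)
    then show "M \<in> {M \<in> partitions n. \<forall>x\<in>#M. odd x}" using h unfolding partitions_def by blast
  qed
qed



definition Dist :: "nat \<Rightarrow> nat \<Rightarrow> nat multiset set" where
  "Dist s m = {M. (\<forall>x\<in>#M. s < x) \<and> (\<forall>x. count M x \<le> 1) \<and> sum_mset M = m}"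

lemma fin_Dist: "finite (Dist s m)"
proof (rule fin_sub[of _ m m])
  fix M assume "M \<in> Dist s m"
  then have h: "\<forall>x\<in>#M. s < x" "sum_mset M = m" by (auto simp: Dist_def)
  have "\<forall>x\<in>#M. 0 < x \<and> x \<le> m"
  proof
    fix x assume x: "x \<in># M"
    then show "0 < x \<and> x \<le> m" using h mem_le_sum[OF x] by fastforce
  qed
  then show "(\<forall>x\<in>#M. 0 < x \<and> x \<le> m) \<and> sum_mset M = m" using h by simp
qed

lemma Dist_rec:
  "card (Dist s m) = card (Dist (Suc s) m) + (if Suc s \<le> m then card (Dist (Suc s) (m - Suc s)) else 0)"
proof -
  have a: "{M \<in> Dist s m. Suc s \<notin># M} = Dist (Suc s) m"
  proof (intro equalityI subsetI)
    fix M assume "M \<in> {M \<in> Dist s m. Suc s \<notin># M}"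
    then have h: "\<forall>x\<in>#M. s < x" "\<forall>x. count M x \<le> 1" "sum_mset M = m" "Suc s \<notin># M"
      by (auto simp: Dist_def)
    have "\<forall>x\<in>#M. Suc s < x"
    proof
      fix x assume x: "x \<in># M"
      then have "x \<noteq> Suc s" using h(4) by auto
      then show "Suc s < x" using h(1) x by fastforce
    qed
    then show "M \<in> Dist (Suc s) m" using h unfolding Dist_def by blast
  next
    fix M assume "M \<in> Dist (Suc s) m"
    then show "M \<in> {M \<in> Dist s m. Suc s \<notin># M}" unfolding Dist_def by fastforce
  qed
  have b: "{X. add_mset (Suc s) X \<in> Dist s m} = (if Suc s \<le> m then Dist (Suc s) (m - Suc s) else {})"
  proof -
    have "add_mset (Suc s) X \<in> Dist s m \<longleftrightarrow> (Suc s \<le> m \<and> X \<in> Dist (Suc s) (m - Suc s))" for X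
    proof
      assume "add_mset (Suc s) X \<in> Dist s m"
      then have h: "\<forall>x\<in>#X. s < x" "\<forall>x. count (add_mset (Suc s) X) x \<le> 1" "Suc s + sum_mset X = m"
        by (auto simp: Dist_def)
      have c: "\<forall>x. count X x \<le> 1" using h(2) by (metis count_add_mset le_SucI nat_le_linear not_less_eq_eq)
      have "count X (Suc s) = 0" using h(2)[rule_format, of "Suc s"] by simp
      then have "\<forall>x\<in>#X. Suc s < x" using h(1) by (metis Suc_lessI count_eq_zero_iff)
      then show "Suc s \<le> m \<and> X \<in> Dist (Suc s) (m - Suc s)" using c h(3) unfolding Dist_def by auto
    next
      assume "Suc s \<le> m \<and> X \<in> Dist (Suc s) (m - Suc s)"
      then have h: "Suc s \<le> m" "\<forall>x\<in>#X. Suc s < x" "\<forall>x. count X x \<le> 1" "sum_mset X = m - Suc s"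
        by (auto simp: Dist_def)
      have "count X (Suc s) = 0" using h(2) by (metis count_eq_zero_iff less_irrefl)
      then have "\<forall>x. count (add_mset (Suc s) X) x \<le> 1" using h(3) by simp
      moreover have "\<forall>x\<in>#add_mset (Suc s) X. s < x" using h(2) by auto
      moreover have "sum_mset (add_mset (Suc s) X) = m" using h(1,4) by simp
      ultimately show "add_mset (Suc s) X \<in> Dist s m" unfolding Dist_def by blast
    qed
    then show ?thesis by auto
  qed
  show ?thesis using card_split[OF fin_Dist, of s m "Suc s"] a b by simp
qed

lemma Dist_top: "card (Dist N N) = (if N = 0 then 1 else 0)"
proof -
  have "Dist N N = (if N = 0 then {{#}} else {})"
  proof (intro equalityI subsetI)
    fix M assume M: "M \<in> Dist N N"
    then have h: "\<forall>x\<in>#M. N < x" "sum_mset M = N" by (auto simp: Dist_def)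
    have "M = {#}"
    proof (rule ccontr)
      assume "M \<noteq> {#}"
      then obtain x where x: "x \<in># M" by (meson multiset_nonemptyE)
      then show False using h mem_le_sum[OF x] by fastforce
    qed
    then show "M \<in> (if N = 0 then {{#}} else {})" using h by simp
  next
    fix M assume "M \<in> (if N = 0 then {{#}} else ({}::nat multiset set))"
    then show "M \<in> Dist N N" by (auto simp: Dist_def split: if_splits)
  qed
  then show ?thesis by simp
qed

lemma D_decomp:
  "{M :: nat multiset. sum_mset M = N \<and> M \<noteq> {#} \<and>
      count M (Min (set_mset M)) = 2 \<and>
      (\<forall>x. x \<noteq> Min (set_mset M) \<longrightarrow> count M x \<le> 1)} =
   (\<Union>s\<in>{0..N div 2}. (\<lambda>X. add_mset s (add_mset s X)) ` Dist s (N - 2*s))"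
proof (intro equalityI subsetI)
  fix M assume "M \<in> {M :: nat multiset. sum_mset M = N \<and> M \<noteq> {#} \<and>
      count M (Min (set_mset M)) = 2 \<and>
      (\<forall>x. x \<noteq> Min (set_mset M) \<longrightarrow> count M x \<le> 1)}"
  then have h: "sum_mset M = N" "M \<noteq> {#}" "count M (Min (set_mset M)) = 2"
     "\<forall>x. x \<noteq> Min (set_mset M) \<longrightarrow> count M x \<le> 1" by auto
  define s where "s = Min (set_mset M)"
  have s: "\<forall>x\<in>#M. s \<le> x" using h(2) s_def by auto
  define X where "X = M - {#s, s#}"
  have cX: "count X x = (if x = s then 0 else count M x)" for x
    using h(3) s_def X_def by auto
  have MX: "M = add_mset s (add_mset s X)"
  proof (rule multiset_eqI)
    fix x show "count M x = count (add_mset s (add_mset s X)) x"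
      using cX[of x] h(3) s_def by auto
  qed
  have "\<forall>x\<in>#X. s < x"
  proof
    fix x assume x: "x \<in># X"
    then have "count X x > 0" by simp
    then have "x \<noteq> s" "count M x > 0" using cX[of x] by (auto split: if_splits)
    then have "x \<noteq> s" "x \<in># M" by auto
    then show "s < x" using s by fastforce
  qed
  moreover have "\<forall>x. count X x \<le> 1" using cX h(4) s_def by simp
  moreover have "sum_mset X = N - 2*s" using MX h(1) by auto
  ultimately have "X \<in> Dist s (N - 2*s)" unfolding Dist_def by blast
  moreover have "s \<in> {0..N div 2}" using MX h(1) by auto
  ultimately show "M \<in> (\<Union>s\<in>{0..N div 2}. (\<lambda>X. add_mset s (add_mset s X)) ` Dist s (N - 2*s))"
    using MX by blast
next
  fix M assume "M \<in> (\<Union>s\<in>{0..N div 2}. (\<lambda>X. add_mset s (add_mset s X)) ` Dist s (N - 2*s))"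
  then obtain s X where sX: "s \<le> N div 2" "X \<in> Dist s (N - 2*s)" "M = add_mset s (add_mset s X)"
    by auto
  have X: "\<forall>x\<in>#X. s < x" "\<forall>x. count X x \<le> 1" "sum_mset X = N - 2*s"
    using sX(2) by (auto simp: Dist_def)
  have mn: "Min (set_mset M) = s" using sX(3) X(1) by (auto intro!: Min_eqI simp: less_imp_le)
  have c0: "count X s = 0" using X(1) by (metis count_eq_zero_iff less_irrefl)
  have "sum_mset M = N" using sX X by auto
  moreover have "count M s = 2" using sX(3) c0 by simp
  moreover have "\<forall>x. x \<noteq> s \<longrightarrow> count M x \<le> 1" using sX(3) X(2) by simp
  ultimately show "M \<in> {M :: nat multiset. sum_mset M = N \<and> M \<noteq> {#} \<and>
      count M (Min (set_mset M)) = 2 \<and>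
      (\<forall>x. x \<noteq> Min (set_mset M) \<longrightarrow> count M x \<le> 1)}"
    using mn sX(3) by simp
qed

lemma D_sum: "D N = (\<Sum>s\<in>{0..N div 2}. card (Dist s (N - 2*s)))"
proof -
  have "D N = card (\<Union>s\<in>{0..N div 2}. (\<lambda>X. add_mset s (add_mset s X)) ` Dist s (N - 2*s))"
    unfolding D_def D_decomp ..
  also have "\<dots> = (\<Sum>s\<in>{0..N div 2}. card ((\<lambda>X. add_mset s (add_mset s X)) ` Dist s (N - 2*s)))"
  proof (rule card_UN_disjoint)
    show "\<forall>i\<in>{0..N div 2}. finite ((\<lambda>X. add_mset i (add_mset i X)) ` Dist i (N - 2 * i))"
      using fin_Dist by auto
    show "\<forall>i\<in>{0..N div 2}. \<forall>j\<in>{0..N div 2}. i \<noteq> j \<longrightarrow>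
      (\<lambda>X. add_mset i (add_mset i X)) ` Dist i (N - 2 * i) \<inter> (\<lambda>X. add_mset j (add_mset j X)) ` Dist j (N - 2 * j) = {}"
    proof (intro ballI impI)
      fix i j :: nat assume "i \<noteq> j"
      have key: "add_mset i (add_mset i X) \<noteq> add_mset j (add_mset j Y)"
        if "i < j" "X \<in> Dist i (N - 2*i)" "Y \<in> Dist j (N - 2*j)" for i j X Y
      proof
        assume eq: "add_mset i (add_mset i X) = add_mset j (add_mset j Y)"
        have "\<forall>x\<in>#Y. j < x" using that(3) by (auto simp: Dist_def)
        then have "count Y i = 0" using that(1) by (metis count_eq_zero_iff less_asym')
        then have "count (add_mset j (add_mset j Y)) i = 0" using that(1) by simp
        moreover have "count (add_mset i (add_mset i X)) i \<ge> 2" by simp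
        ultimately show False using eq by simp
      qed
      show "(\<lambda>X. add_mset i (add_mset i X)) ` Dist i (N - 2 * i) \<inter> (\<lambda>X. add_mset j (add_mset j X)) ` Dist j (N - 2 * j) = {}"
      proof (rule equals0I)
        fix M assume "M \<in> (\<lambda>X. add_mset i (add_mset i X)) ` Dist i (N - 2 * i) \<inter> (\<lambda>X. add_mset j (add_mset j X)) ` Dist j (N - 2 * j)"
        then obtain X Y where XY: "X \<in> Dist i (N - 2*i)" "Y \<in> Dist j (N - 2*j)"
          "M = add_mset i (add_mset i X)" "M = add_mset j (add_mset j Y)" by blast
        show False
        proof (cases "i < j")
          case True then show False using key[OF True XY(1,2)] XY(3,4) by simp
        next
          case False then have "j < i" using \<open>i \<noteq> j\<close> by simp
          then show False using key[OF _ XY(2,1)] XY(3,4) by simp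
        qed
      qed
    qed
  qed simp
  also have "\<dots> = (\<Sum>s\<in>{0..N div 2}. card (Dist s (N - 2*s)))"
    by (rule sum.cong) (auto intro!: card_image simp: inj_on_def)
  finally show ?thesis .
qed



abbreviation dd where "dd s m \<equiv> card (Dist s m)"

lemma L1: "dd 0 N = dd t N + (\<Sum>s\<in>{1..t}. if s \<le> N then dd s (N - s) else 0)"
proof (induction t)
  case 0
  then show ?case by simp
next
  case (Suc t)
  have "dd t N = dd (Suc t) N + (if Suc t \<le> N then dd (Suc t) (N - Suc t) else 0)"
    by (rule Dist_rec)
  then show ?case using Suc by simp
qed

lemma L1': "1 \<le> N \<Longrightarrow> dd 0 N = (\<Sum>s\<in>{1..N}. dd s (N - s))"
  using L1[of N N] Dist_top[of N] by simp

lemma L3: "(\<Sum>s\<in>{1..N}. dd (s - 1) (N - s)) = (\<Sum>s\<in>{1..N}. dd s (N - s)) + (\<Sum>s\<in>{1..N}. if 2*s \<le> N then dd s (N - 2*s) else 0)"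
proof -
  have "dd (s - 1) (N - s) = dd s (N - s) + (if 2*s \<le> N then dd s (N - 2*s) else 0)" if "s \<in> {1..N}" for s
  proof -
    have s: "Suc (s - 1) = s" using that by simp
    have "dd (s - 1) (N - s) = dd (Suc (s-1)) (N - s) + (if Suc (s-1) \<le> N - s then dd (Suc (s-1)) (N - s - Suc (s-1)) else 0)"
      by (rule Dist_rec)
    also have "\<dots> = dd s (N - s) + (if 2*s \<le> N then dd s (N - 2*s) else 0)"
      using that s by (auto simp: diff_diff_add mult_2)
    finally show ?thesis .
  qed
  then have "(\<Sum>s\<in>{1..N}. dd (s - 1) (N - s)) = (\<Sum>s\<in>{1..N}. dd s (N - s) + (if 2*s \<le> N then dd s (N - 2*s) else 0))"
    by (rule sum.cong[OF refl])
  then show ?thesis by (simp add: sum.distrib)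
qed

lemma L4: "(\<Sum>s\<in>{1..Suc M}. dd (s - 1) (Suc M - s)) = dd 0 M + (\<Sum>t\<in>{1..M}. dd t (M - t))"
proof -
  have "(\<Sum>s\<in>{1..Suc M}. dd (s - 1) (Suc M - s)) = (\<Sum>t\<in>{0..M}. dd t (M - t))"
    using sum.atLeast_Suc_atMost_Suc_shift[of "\<lambda>s. dd (s - 1) (Suc M - s)" 0 M] by simp
  also have "\<dots> = dd 0 M + (\<Sum>t\<in>{Suc 0..M}. dd t (M - t))"
    using sum.atLeast_Suc_atMost[of 0 M "\<lambda>t. dd t (M - t)"] by simp
  finally show ?thesis by simp
qed

lemma L5: "(\<Sum>s\<in>{1..N}. if 2*s \<le> N then dd s (N - 2*s) else 0) = (\<Sum>s\<in>{1..N div 2}. dd s (N - 2*s))"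
proof -
  have "{s \<in> {1..N}. 2*s \<le> N} = {1..N div 2}" by auto
  then show ?thesis using sum.inter_filter[of "{1..N}" "\<lambda>s. dd s (N - 2*s)" "\<lambda>s. 2*s \<le> N"] by simp
qed

lemma D_eq: assumes "2 \<le> N" shows "D N = 2 * dd 0 (N - 1)"
proof -
  obtain M where M: "N = Suc M" "1 \<le> M" using assms by (metis Suc_le_D Suc_le_mono one_add_one plus_1_eq_Suc)
  have "D N = dd 0 N + (\<Sum>s\<in>{1..N div 2}. dd s (N - 2*s))"
    unfolding D_sum using sum.atLeast_Suc_atMost[of 0 "N div 2" "\<lambda>s. dd s (N - 2*s)"] by simp
  moreover have "(\<Sum>s\<in>{1..N}. dd (s - 1) (N - s)) = 2 * dd 0 M"
    using L4[of M] L1'[OF M(2)] M(1) by simp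
  moreover have "dd 0 N = (\<Sum>s\<in>{1..N}. dd s (N - s))" using L1' assms by simp
  ultimately show ?thesis using L3[of N] L5[of N] M(1) by simp
qed


lemma A_Dist: "A n = card (Dist 0 n)"
  unfolding A_def partitions_def Dist_def by (rule arg_cong[where f=card]) auto

theorem theorem7:
  fixes n :: nat
  assumes "0 < n"
  shows "A n = B n \<and> B n = C (n + 1) \<and> 2 * C (n + 1) = D (n + 1) \<and>
         C (n + 1) = E (n + 2) \<and> E (n + 2) = F (n + 1)"
proof -
  have n1: "1 \<le> n" using assms by simp
  define K where "K = {1..(n+1) div 2}"
  define S where "S = (\<Sum>k\<in>K. card (Od k (n+1-2*k)))"
  have AB: "A n = B n"
    unfolding A_def B_def AB_sets[OF assms] using glaisher[OF n1] by simp
  have BS: "B n = S"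
    unfolding B_def B_decomp[OF assms] S_def K_def
  proof (rule card_decomp)
    show "inj_on (\<lambda>k. 2 * k - 1) {1..(n + 1) div 2}" by (auto simp: inj_on_def)
    show "\<And>k X x. k \<in> {1..(n + 1) div 2} \<Longrightarrow> X \<in> Od k (n + 1 - 2 * k) \<Longrightarrow> x \<in># X \<Longrightarrow> x \<le> 2 * k - 1"
      by (auto simp: Od_def)
  qed (auto simp: fin_Od)
  have FS: "F (n+1) = S"
    unfolding F_def F_decomp S_def K_def
  proof (rule card_decomp)
    show "inj_on (\<lambda>k. 2 * k) {1..(n + 1) div 2}" by (auto simp: inj_on_def)
    show "\<And>k X x. k \<in> {1..(n + 1) div 2} \<Longrightarrow> X \<in> Od k (n + 1 - 2 * k) \<Longrightarrow> x \<in># X \<Longrightarrow> x \<le> 2 * k"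
      by (auto simp: Od_def less_imp_le)
  qed (auto simp: fin_Od)
  have ES: "E (n+2) = S"
    unfolding E_def E_decomp S_def K_def
  proof (rule card_decomp)
    show "inj_on (\<lambda>k. 2 * k + 1) {1..(n + 1) div 2}" by (auto simp: inj_on_def)
    show "\<And>k X x. k \<in> {1..(n + 1) div 2} \<Longrightarrow> X \<in> Od k (n + 1 - 2 * k) \<Longrightarrow> x \<in># X \<Longrightarrow> x \<le> 2 * k + 1"
      by (auto simp: Od_def less_imp_le)
  qed (auto simp: fin_Od)
  have "C (n+1) = (\<Sum>k\<in>K. card (Q k (n+1-2*k)))"
    unfolding C_def C_decomp K_def
  proof (rule card_decomp)
    show "inj_on (\<lambda>k. 2 * k) {1..(n + 1) div 2}" by (auto simp: inj_on_def)
    show "\<And>k X x. k \<in> {1..(n + 1) div 2} \<Longrightarrow> X \<in> Q k (n + 1 - 2 * k) \<Longrightarrow> x \<in># X \<Longrightarrow> x \<le> 2 * k"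
      by (auto simp: Q_def)
  qed (auto simp: fin_Q)
  also have "\<dots> = S" unfolding S_def K_def by (rule sum.cong) (auto intro: glaisher)
  finally have CS: "C (n+1) = S" .
  have "D (n+1) = 2 * card (Dist 0 n)" using D_eq[of "n+1"] assms by simp
  then have DA: "D (n+1) = 2 * A n" using A_Dist by simp
  show ?thesis using AB BS FS ES CS DA by simp
qed

end
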